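(* For every nonzero integer $r$ and every integer $n\ge 0$, \[ \sum_{j=0}^{n}(-1)^{rj}L_{r(n-2j)}=\sum_{j=0}^{n}\left(\frac{L_r}{2}\right)^jL_{r(n-j)}=\frac{2F_{r(n+1)}}{F_r}. \]
   Context: $F_n$ and $L_n$ denote the Fibonacci and Lucas numbers, defined for all integers $n$ by $F_0=0,F_1=1$, $L_0=2,L_1=1$ and $x_n=x_{n-1}+x_{n-2}$; equivalently $F_n=(\alpha^n-\beta^n)/(\alpha-\beta)$, $L_n=\alpha^n+\beta^n$ with $\alpha=(1+\sqrt5)/2$, $\beta=(1-\sqrt5)/2$. In particular $F_{-n}=(-1)^{n-1}F_n$ and $L_{-n}=(-1)^nL_n$. *)

theory Defs
  imports Complex_Main
begin

definition phi_a :: real where "phi_a = (1 + sqrt 5) / 2"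
definition phi_b :: real where "phi_b = (1 - sqrt 5) / 2"

definition fibz :: "int \<Rightarrow> real" where
  "fibz n = (phi_a powi n - phi_b powi n) / (phi_a - phi_b)"
definition lucz :: "int \<Rightarrow> real" where
  "lucz n = phi_a powi n + phi_b powi n"

end

theory Submission
  imports Defs
begin

lemma lemB:
  fixes a b :: real
  shows "(\<Sum>j=0..n. ((a+b)/2)^j * (a^(n-j)+b^(n-j))) * (a-b) = 2*(a^(n+1)-b^(n+1))"
proof (induction n)
  case 0 then show ?case by (simp add: algebra_simps)
next
  case (Suc n)
  define S where "S = (\<Sum>j=0..n. ((a+b)/2)^j * (a^(n-j)+b^(n-j)))"
  have IH: "S*(a-b) = 2*(a^(n+1)-b^(n+1))" using Suc.IH S_def by simp
  have "(\<Sum>j=0..Suc n. ((a+b)/2)^j * (a^(Suc n-j)+b^(Suc n-j)))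
     = (a^(Suc n)+b^(Suc n)) + ((a+b)/2) * S"
    unfolding S_def by (simp add: sum.atLeast0_atMost_Suc_shift sum_distrib_left mult.assoc del: sum.cl_ivl_Suc)
  moreover have "((a^(Suc n)+b^(Suc n)) + ((a+b)/2) * S) * (a-b)
     = (a^(Suc n)+b^(Suc n))*(a-b) + (a+b) * (S * (a-b)) / 2"
    by (simp add: field_simps)
  moreover have "(a^(Suc n)+b^(Suc n))*(a-b) + (a+b) * (2*(a^(n+1)-b^(n+1))) / 2 = 2*(a^(Suc n+1)-b^(Suc n+1))"
    by (simp add: field_simps)
  ultimately show ?case using IH by simp
qed

lemma geo: fixes a b :: real
  shows "(\<Sum>j=0..n. a^(n-j)*b^j) * (a-b) = a^(n+1)-b^(n+1)"
proof -
  have "a^(n+1)-b^(n+1) = (a-b)*(\<Sum>i<n+1. b^(n+1-Suc i)*a^i)" by (rule power_diff_sumr2)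
  also have "(\<Sum>i<n+1. b^(n+1-Suc i)*a^i) = (\<Sum>i=0..n. b^(n-i)*a^i)"
    by (intro sum.cong) auto
  also have "\<dots> = (\<Sum>j=0..n. a^(n-j)*b^j)"
    by (subst sum.atLeastAtMost_rev[of _ 0 n, simplified]) (intro sum.cong, auto)
  finally show ?thesis by (simp add: mult.commute)
qed

lemma lemA:
  fixes a b :: real
  assumes "a \<noteq> 0" "b \<noteq> 0"
  shows "(\<Sum>j=0..n. (a*b)^j * (a powi (int n - 2*int j) + b powi (int n - 2*int j))) * (a-b) = 2*(a^(n+1)-b^(n+1))"
proof -
  have k: "x^j * x powi (int n - 2*int j) = x^(n-j)" if "x \<noteq> 0" "j \<le> n" for x :: real and j
  proof -
    have "x powi (int j + (int n - 2*int j)) = x powi (int j) * x powi (int n - 2*int j)"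
      using power_int_add[of x "int j" "int n - 2*int j"] that by simp
    then have "x^j * x powi (int n - 2*int j) = x powi (int j + (int n - 2*int j))"
      by simp
    also have "int j + (int n - 2*int j) = int (n-j)" using that by simp
    finally show ?thesis by simp
  qed
  have "(\<Sum>j=0..n. (a*b)^j * (a powi (int n - 2*int j) + b powi (int n - 2*int j)))
      = (\<Sum>j=0..n. a^(n-j)*b^j) + (\<Sum>j=0..n. b^(n-j)*a^j)"
    unfolding sum.distrib[symmetric]
  proof (intro sum.cong refl)
    fix j assume "j \<in> {0..n}"
    then have "j \<le> n" by simp
    then show "(a*b)^j * (a powi (int n - 2*int j) + b powi (int n - 2*int j)) = a^(n-j)*b^j + b^(n-j)*a^j"
      using k[OF assms(1)] k[OF assms(2)] by (simp add: power_mult_distrib algebra_simps)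
  qed
  also have "(\<Sum>j=0..n. b^(n-j)*a^j) = (\<Sum>j=0..n. a^(n-j)*b^j)"
    by (subst sum.atLeastAtMost_rev[of _ 0 n, simplified]) (intro sum.cong, auto)
  finally show ?thesis using geo[of a n b] by (simp add: algebra_simps)
qed


lemma phis: "phi_a * phi_b = -1" "phi_a - phi_b = sqrt 5" "phi_a + phi_b = 1"
  "phi_a \<noteq> 0" "phi_b \<noteq> 0" "\<bar>phi_a\<bar> > 1" "\<bar>phi_b\<bar> < 1"
proof -
  have s5: "sqrt 5 * sqrt 5 = (5::real)" by simp
  have g2: "sqrt 5 > (2::real)" by (simp add: real_less_rsqrt)
  have l3: "sqrt 5 < (3::real)" by (rule real_less_lsqrt) auto
  show "phi_a * phi_b = -1" unfolding phi_a_def phi_b_def by (simp add: field_simps s5)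
  show "phi_a - phi_b = sqrt 5" "phi_a + phi_b = 1" unfolding phi_a_def phi_b_def by (simp_all add: field_simps)
  show "\<bar>phi_a\<bar> > 1" "\<bar>phi_b\<bar> < 1" unfolding phi_a_def phi_b_def using g2 l3 by auto
  then show "phi_a \<noteq> 0" "phi_b \<noteq> 0" unfolding phi_b_def using g2 by auto
qed

lemma pow_ne: assumes "m > 0" shows "phi_a ^ m \<noteq> phi_b ^ m"
proof -
  have "\<bar>phi_a\<bar> ^ m > 1" using phis(6) assms by (simp add: one_less_power)
  moreover have "\<bar>phi_b\<bar> ^ m < 1" using phis(7) assms by (simp add: power_less_one_iff)
  ultimately show ?thesis by (metis power_abs less_asym)
qed

theorem theorem1:
  fixes r :: int and n :: nat
  assumes "r \<noteq> 0"
  shows "(\<Sum>j=0..n. (-1) ^ (nat \<bar>r\<bar> * j) * lucz (r * (int n - 2 * int j)))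
           = (\<Sum>j=0..n. (lucz r / 2) ^ j * lucz (r * (int n - int j)))
       \<and> (\<Sum>j=0..n. (lucz r / 2) ^ j * lucz (r * (int n - int j)))
           = 2 * fibz (r * (int n + 1)) / fibz r"
proof -
  define a where "a = phi_a powi r"
  define b where "b = phi_b powi r"
  have a0: "a \<noteq> 0" and b0: "b \<noteq> 0" unfolding a_def b_def using phis by auto
  have ab: "a \<noteq> b"
  proof (cases "r > 0")
    case True
    then show ?thesis unfolding a_def b_def power_int_def using pow_ne[of "nat r"] by simp
  next
    case False
    then have "nat (-r) > 0" using assms by simp
    then have ne: "phi_a ^ nat (-r) \<noteq> phi_b ^ nat (-r)" by (rule pow_ne)
    have "inverse phi_a ^ nat (-r) \<noteq> inverse phi_b ^ nat (-r)"
      unfolding power_inverse using ne by simp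
    then show ?thesis unfolding a_def b_def power_int_def using False assms by simp
  qed
  have L: "lucz (r*m) = a powi m + b powi m" for m
    unfolding lucz_def a_def b_def by (simp add: power_int_mult)
  have Ln: "lucz (r*int k) = a^k + b^k" for k using L[of "int k"] by simp
  have Lr: "lucz r = a + b" using Ln[of 1] by simp
  have F: "fibz (r*int k) = (a^k - b^k) / sqrt 5" for k
    unfolding fibz_def a_def b_def phis(2) by (simp add: power_int_mult)
  have Fr: "fibz r = (a - b) / sqrt 5" using F[of 1] by simp
  have m1: "(-1::real) ^ (nat \<bar>r\<bar> * j) = (a*b)^j" for j
  proof -
    have "a*b = (-1) powi r" unfolding a_def b_def by (simp add: power_int_mult_distrib[symmetric] phis(1))
    also have "\<dots> = (-1)^(nat \<bar>r\<bar>)" by (simp add: power_int_def)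
    finally show ?thesis by (simp add: power_mult)
  qed
  have R: "2 * fibz (r * (int n + 1)) / fibz r = 2*(a^(n+1)-b^(n+1)) / (a-b)"
    using F[of "n+1"] Fr by (simp add: add.commute)
  have S1: "(\<Sum>j=0..n. (-1) ^ (nat \<bar>r\<bar> * j) * lucz (r * (int n - 2 * int j))) = 2*(a^(n+1)-b^(n+1)) / (a-b)"
    using lemA[OF a0 b0, of n] ab by (simp add: m1 L eq_divide_eq)
  have S2: "(\<Sum>j=0..n. (lucz r / 2) ^ j * lucz (r * (int n - int j))) = 2*(a^(n+1)-b^(n+1)) / (a-b)"
  proof -
    have "(\<Sum>j=0..n. (lucz r / 2) ^ j * lucz (r * (int n - int j))) = (\<Sum>j=0..n. ((a+b)/2)^j * (a^(n-j)+b^(n-j)))"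
      by (intro sum.cong refl) (auto simp: Lr Ln[symmetric] of_nat_diff)
    then show ?thesis using lemB[of a b n] ab by (simp add: eq_divide_eq)
  qed
  show ?thesis using S1 S2 R by simp
qed

end
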